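(* Let $q$ be an odd prime power, $P\in\mathbb{F}_q[T]$ monic irreducible with $\chi_q(P)=-1$, and $h=(h_1,\dots,h_k)$ a $k$-tuple of pairwise distinct polynomials. Then $\delta_{q,h}(P)=1-\frac{\eta}{|P|+1}$ for some real $\eta$ with $1\le\eta\le k$; moreover $\eta=1$ when $h$ is the $1$-tuple $(0)$, and $\eta=k$ when $P\nmid\Delta_h$.
   Context: $|P|=q^{\deg P}$; $\chi_q(f)=0$ if $f(0)=0$, $1$ if $f(0)$ is a nonzero square in $\mathbb{F}_q$, $-1$ otherwise. $\mathcal{A}_q(P^\nu)=\{A^2+TB^2\bmod P^\nu:A,B\in\mathbb{F}_q[T]\}$, $\mathcal{A}_{q,h}(P^\nu)=\{f\bmod P^\nu:f+h_i\in\mathcal{A}_q(P^\nu)\ \forall i\}$, $\delta_{q,h}(P)=\lim_{\nu\to\infty}|P|^{-\nu}\#\mathcal{A}_{q,h}(P^\nu)$. $\Delta_h=\prod_{i\ne j}(h_i-h_j)$ (empty product $=1$). *)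

theory Defs
  imports "HOL-Computational_Algebra.Polynomial" Complex_Main
begin

definition polnorm :: "'a::{finite,field} poly \<Rightarrow> nat" where
  "polnorm P = card (UNIV :: 'a set) ^ degree P"

definition chi_q :: "'a::{finite,field} poly \<Rightarrow> int" where
  "chi_q f = (if poly f 0 = 0 then 0
              else if (\<exists>y. poly f 0 = y ^ 2) then 1 else -1)"

definition Aq :: "'a::{finite,field} poly \<Rightarrow> 'a poly set" where
  "Aq M = {(A ^ 2 + [:0, 1:] * B ^ 2) mod M | A B. True}"

definition Aqh :: "'a::{finite,field} poly \<Rightarrow> 'a poly list \<Rightarrow> 'a poly set" where
  "Aqh M h = {f mod M | f. \<forall>i < length h. (f + h ! i) mod M \<in> Aq M}"

definition Delta_h :: "'a::{finite,field} poly list \<Rightarrow> 'a poly" where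
  "Delta_h h = (\<Prod>(i, j) \<in> {(i, j). i < length h \<and> j < length h \<and> i \<noteq> j}. h ! i - h ! j)"

end

theory Submission
  imports Defs
begin


lemma invol_even:
  assumes "finite S" and "\<forall>x\<in>S. f x \<in> S \<and> f (f x) = x \<and> f x \<noteq> x"
  shows "even (card S)"
  using assms
proof (induct "card S" arbitrary: S rule: less_induct)
  case less
  show ?case
  proof (cases "S = {}")
    case False
    then obtain x where x: "x \<in> S" by blast
    define S' where "S' = S - {x, f x}"
    have fx: "f x \<in> S" "f x \<noteq> x" using less.prems x by auto
    have sub: "{x, f x} \<subseteq> S" using x fx by auto
    have c1: "card S' = card S - card {x, f x}" unfolding S'_def
      using less.prems(1) sub by (meson card_Diff_subset finite_subset)
    have c2: "card {x, f x} = 2" using fx(2) by simp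
    have c3: "card {x, f x} \<le> card S" using less.prems(1) sub by (rule card_mono)
    have cS': "card S = card S' + 2" using c1 c2 c3 by linarith
    have "even (card S')"
    proof (rule less.hyps)
      show "card S' < card S" using cS' by simp
      show "finite S'" using less.prems(1) S'_def by simp
      show "\<forall>y\<in>S'. f y \<in> S' \<and> f (f y) = y \<and> f y \<noteq> y"
      proof
        fix y assume y: "y \<in> S'"
        hence yS: "y \<in> S" and yx: "y \<noteq> x" "y \<noteq> f x" unfolding S'_def by auto
        have p: "f y \<in> S" "f (f y) = y" "f y \<noteq> y" using less.prems(2) yS by auto
        have px: "f (f x) = x" using less.prems(2) x by auto
        have "f y \<noteq> x" using p(2) yx(2) by auto
        moreover have "f y \<noteq> f x" using p(2) px yx(1) by metis
        ultimately show "f y \<in> S' \<and> f (f y) = y \<and> f y \<noteq> y" using p unfolding S'_def by auto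
      qed
    qed
    thus ?thesis using cS' by simp
  next
    case True
    thus ?thesis by simp
  qed
qed

lemma two_nz:
  assumes "odd (card (UNIV :: 'a::{finite,field} set))"
  shows "(2::'a) \<noteq> 0"
proof
  assume two: "(2::'a) = 0"
  have "even (card (UNIV :: 'a set))"
  proof (rule invol_even[of _ "\<lambda>x. x + 1"])
    show "\<forall>x\<in>(UNIV::'a set). x + 1 \<in> UNIV \<and> x + 1 + 1 = x \<and> x + 1 \<noteq> x"
    proof
      fix x :: 'a
      have "x + 1 + 1 = x + 2" by (simp add: add.assoc)
      thus "x + 1 \<in> UNIV \<and> x + 1 + 1 = x \<and> x + 1 \<noteq> x" using two by simp
    qed
  qed simp
  thus False using assms by simp
qed

lemma bez:
  fixes A B :: "'a::field poly"
  assumes "A \<noteq> 0"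
  shows "\<exists>g u v. g = u*A + v*B \<and> g dvd A \<and> g dvd B \<and> g \<noteq> 0"
proof -
  define S where "S = {g. \<exists>u v. g = u*A + v*B \<and> g \<noteq> 0}"
  have AS: "A \<in> S" proof -
    have "A = 1*A + 0*B" by simp
    thus ?thesis unfolding S_def using assms by blast
  qed
  define n where "n = (LEAST n. \<exists>g\<in>S. degree g = n)"
  have "\<exists>g\<in>S. degree g = n" unfolding n_def by (rule LeastI[of _ "degree A"]) (use AS in auto)
  then obtain g where gS: "g \<in> S" and dg: "degree g = n" by blast
  have mini: "\<And>g'. g' \<in> S \<Longrightarrow> n \<le> degree g'" unfolding n_def by (auto intro: Least_le)
  from gS obtain u v where g: "g = u*A + v*B" and gnz: "g \<noteq> 0" unfolding S_def by auto
  have dv: "g dvd Z" if Z: "Z = a*A + b*B" for Z a b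
  proof (rule ccontr)
    assume "\<not> g dvd Z"
    hence mz: "Z mod g \<noteq> 0" by (simp add: dvd_eq_mod_eq_0)
    have "Z mod g = Z - (Z div g) * g" by (simp add: minus_div_mult_eq_mod)
    also have "\<dots> = (a - (Z div g)*u) * A + (b - (Z div g)*v) * B" using Z g by (simp add: algebra_simps)
    finally have "Z mod g \<in> S" using mz unfolding S_def by blast
    hence "n \<le> degree (Z mod g)" by (rule mini)
    moreover have "degree (Z mod g) < degree g" using degree_mod_less'[OF gnz mz] .
    ultimately show False using dg by simp
  qed
  have "g dvd A" by (rule dv[of A 1 0]) simp
  moreover have "g dvd B" by (rule dv[of B 0 1]) simp
  ultimately show ?thesis using g gnz by blast
qed

lemma irr_bez:
  fixes P a :: "'a::field poly"
  assumes irr: "irreducible P" and nd: "\<not> P dvd a"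
  shows "\<exists>u v. u*P + v*a = 1"
proof -
  have Pnz: "P \<noteq> 0" using irr by auto
  obtain g u v where g: "g = u*P + v*a" and gP: "g dvd P" and ga: "g dvd a" and gnz: "g \<noteq> 0"
    using bez[OF Pnz, of a] by blast
  from gP obtain k where Pk: "P = g * k" by (auto elim: dvdE)
  have "is_unit g"
  proof (rule ccontr)
    assume "\<not> is_unit g"
    hence "is_unit k" using irreducibleD[OF irr Pk] by blast
    hence "P dvd g" using Pk by (metis dvd_mult_unit_iff dvd_refl)
    hence "P dvd a" using ga by (metis dvd_trans)
    thus False using nd by simp
  qed
  then obtain w where "1 = g * w" by (auto elim: dvdE)
  hence "(w*u)*P + (w*v)*a = 1" using g by (simp add: algebra_simps)
  thus ?thesis by blast
qed

lemma irr_prime: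
  fixes P a b :: "'a::field poly"
  assumes irr: "irreducible P" and d: "P dvd a * b"
  shows "P dvd a \<or> P dvd b"
proof (cases "P dvd a")
  case False
  then obtain u v where uv: "u*P + v*a = 1" using irr_bez[OF irr] by blast
  have "b = (u*b)*P + v*(a*b)" using arg_cong[OF uv, of "\<lambda>t. t*b"] by (simp add: algebra_simps)
  thus ?thesis using d by (metis dvd_add dvd_mult dvd_triv_right)
qed simp


lemma sq_lemma:
  fixes P C :: "'a::field poly"
  assumes two: "(2::'a) \<noteq> 0" and monic: "lead_coeff P = 1" and P0: "poly P 0 \<noteq> 0"
    and dv: "P dvd C^2 + [:0,1:]"
  shows "\<exists>y. poly P 0 = y^2"
proof -
  define Y :: "'a poly" where "Y = [:0,0,-1:]"
  define X :: "'a poly" where "X = [:0,1:]"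
  define F where "F = pcompose P Y"
  define U where "U = pcompose C Y"
  define \<sigma> where "\<sigma> = (\<lambda>p::'a poly. pcompose p [:0,-1:])"
  have degY: "degree Y = 2" by (simp add: Y_def)
  have PnZ: "P \<noteq> 0" using monic by auto
  have F0: "poly F 0 = poly P 0" by (simp add: F_def Y_def poly_pcompose)
  have FnZ: "F \<noteq> 0" using F0 P0 by auto
  have degF: "degree F = 2 * degree P" by (simp add: F_def degree_pcompose degY)
  have leadF: "lead_coeff F = (-1)^degree P"
    unfolding F_def by (subst lead_coeff_comp) (use monic in \<open>auto simp: Y_def\<close>)
  have "pcompose (C^2 + [:0,1:]) Y = U^2 + Y"
    by (simp add: U_def pcompose_add pcompose_mult power2_eq_square pcompose_pCons)
  also have "\<dots> = (U - X) * (U + X)" by (simp add: X_def Y_def algebra_simps power2_eq_square)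
  finally have e1: "pcompose (C^2 + [:0,1:]) Y = (U - X) * (U + X)" .
  from dv obtain k where "C^2 + [:0,1:] = P * k" by (auto elim: dvdE)
  hence "pcompose (C^2 + [:0,1:]) Y = F * pcompose k Y" by (simp add: F_def pcompose_mult)
  hence Fdv: "F dvd (U - X) * (U + X)" using e1 by (metis dvd_triv_left)
  obtain g1 u1 v1 where g1: "g1 = u1*F + v1*(U - X)" and g1F: "g1 dvd F" and g1a: "g1 dvd U - X"
    and g1nz: "g1 \<noteq> 0" using bez[OF FnZ, of "U - X"] by blast
  obtain g2 u2 v2 where g2: "g2 = u2*F + v2*(U + X)" and g2F: "g2 dvd F" and g2a: "g2 dvd U + X"
    and g2nz: "g2 \<noteq> 0" using bez[OF FnZ, of "U + X"] by blast
  have sig_mult: "\<sigma> (a*b) = \<sigma> a * \<sigma> b" for a b by (simp add: \<sigma>_def pcompose_mult)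
  have sig_dvd: "a dvd b \<Longrightarrow> \<sigma> a dvd \<sigma> b" for a b by (auto simp: sig_mult elim!: dvdE)
  have sigsig: "\<sigma> (\<sigma> a) = a" for a
    by (simp add: \<sigma>_def pcompose_assoc[symmetric] pcompose_pCons)
  have sigY: "pcompose Y [:0,-1:] = Y" by (simp add: Y_def pcompose_pCons)
  have sigF: "\<sigma> F = F" by (simp add: \<sigma>_def F_def pcompose_assoc[symmetric] sigY)
  have sigU: "\<sigma> U = U" by (simp add: \<sigma>_def U_def pcompose_assoc[symmetric] sigY)
  have sigX: "\<sigma> X = - X" by (simp add: \<sigma>_def X_def pcompose_pCons)
  have sig1: "\<sigma> (U - X) = U + X" by (simp add: \<sigma>_def pcompose_diff sigU[unfolded \<sigma>_def] sigX[unfolded \<sigma>_def])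
  have sig2: "\<sigma> (U + X) = U - X" by (simp add: \<sigma>_def pcompose_add sigU[unfolded \<sigma>_def] sigX[unfolded \<sigma>_def])
  have degsig: "degree (\<sigma> a) = degree a" for a by (simp add: \<sigma>_def degree_pcompose)
  have sig0: "poly (\<sigma> a) 0 = poly a 0" for a by (simp add: \<sigma>_def poly_pcompose)
  have s12: "\<sigma> g1 dvd g2"
  proof -
    have "\<sigma> g1 dvd F" using sig_dvd[OF g1F] sigF by simp
    moreover have "\<sigma> g1 dvd U + X" using sig_dvd[OF g1a] sig1 by simp
    ultimately show ?thesis unfolding g2 by simp
  qed
  have s21: "\<sigma> g2 dvd g1"
  proof -
    have "\<sigma> g2 dvd F" using sig_dvd[OF g2F] sigF by simp
    moreover have "\<sigma> g2 dvd U - X" using sig_dvd[OF g2a] sig2 by simp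
    ultimately show ?thesis unfolding g1 by simp
  qed
  have s21': "g2 dvd \<sigma> g1" using sig_dvd[OF s21] sigsig by simp
  have copFX: "is_unit c" if cF: "c dvd F" and cX: "c dvd X" for c
  proof (rule ccontr)
    assume nu: "\<not> is_unit c"
    from cX obtain m where Xm: "X = c * m" by (auto elim: dvdE)
    have cnz: "c \<noteq> 0" using Xm X_def by auto
    have "degree c \<noteq> 0" using nu cnz by (metis is_unit_iff_degree)
    moreover have "degree c \<le> 1" using dvd_imp_degree_le[OF cX] by (simp add: X_def)
    ultimately have dc: "degree c = 1" by simp
    have "m \<noteq> 0" using Xm X_def by auto
    hence "degree X = degree c + degree m" using Xm cnz by (simp add: degree_mult_eq)
    hence "degree m = 0" using dc by (simp add: X_def)
    then obtain u where mu: "m = [:u:]" by (metis degree_eq_zeroE)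
    have "poly X 0 = poly c 0 * u" using Xm mu by simp
    hence "poly c 0 = 0" using Xm mu \<open>m \<noteq> 0\<close> by (simp add: X_def)
    moreover from cF obtain w where "F = c * w" by (auto elim: dvdE)
    ultimately have "poly F 0 = 0" by simp
    thus False using F0 P0 by simp
  qed
  have "g1 * g2 dvd F"
  proof -
    obtain e u v where e: "e = u*g1 + v*g2" and e1: "e dvd g1" and e2: "e dvd g2"
      using bez[OF g1nz, of g2] by blast
    have eF: "e dvd F" using e1 g1F by (rule dvd_trans)
    have "e dvd U - X" using e1 g1a by (rule dvd_trans)
    moreover have "e dvd U + X" using e2 g2a by (rule dvd_trans)
    ultimately have "e dvd (U + X) - (U - X)" by (metis dvd_diff)
    hence "e dvd smult (inverse 2) ((U + X) - (U - X))" by (rule dvd_smult)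
    moreover have "smult (inverse 2) ((U + X) - (U - X)) = X"
    proof -
      have h2: "inverse 2 + inverse 2 = (1::'a)" using two
        by (metis mult_2 right_inverse one_add_one distrib_right mult_1)
      have "(U + X) - (U - X) = X + X" by simp
      hence "smult (inverse 2) ((U + X) - (U - X)) = smult (inverse 2) X + smult (inverse 2) X"
        by (simp only: smult_add_right)
      also have "\<dots> = smult (inverse 2 + inverse 2) X" by (simp only: smult_add_left)
      also have "\<dots> = X" by (simp only: h2 smult_1_left)
      finally show ?thesis .
    qed
    ultimately have eX: "e dvd X" by simp
    have "is_unit e" using copFX[OF eF eX] .
    then obtain w where "1 = e * w" by (auto elim: dvdE)
    hence one: "1 = (w*u)*g1 + (w*v)*g2" using e by (simp add: algebra_simps)
    have "F = (w*u)*(g1*F) + (w*v)*(g2*F)" using arg_cong[OF one, of "\<lambda>t. t*F"] by (simp add: algebra_simps)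
    moreover have "g1*g2 dvd g1*F" using g2F by simp
    moreover have "g1*g2 dvd g2*F" using g1F by (simp add: mult.commute)
    ultimately show ?thesis by (metis dvd_add dvd_mult)
  qed
  then obtain k where Fk: "F = g1 * g2 * k" by (auto elim: dvdE)
  have Fdv2: "F dvd g1 * g2"
  proof -
    have "g1*g2 = F*(u1*u2*F + u1*v2*(U+X) + v1*u2*(U-X)) + v1*v2*((U-X)*(U+X))"
      unfolding g1 g2 by (simp add: algebra_simps)
    thus ?thesis using Fdv by (metis dvd_add dvd_mult dvd_triv_left)
  qed
  have knz: "k \<noteq> 0" using Fk FnZ by auto
  have "degree F \<le> degree (g1*g2)" using dvd_imp_degree_le[OF Fdv2] g1nz g2nz by simp
  hence "degree k = 0" using Fk knz g1nz g2nz by (simp add: degree_mult_eq)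
  then obtain u where ku: "k = [:u:]" by (metis degree_eq_zeroE)
  have sg1nz: "\<sigma> g1 \<noteq> 0"
  proof
    assume "\<sigma> g1 = 0"
    hence "\<sigma> (\<sigma> g1) = 0" by (simp add: \<sigma>_def)
    thus False using sigsig g1nz by simp
  qed
  have dd1: "degree (\<sigma> g1) \<le> degree g2" using dvd_imp_degree_le[OF s12 g2nz] .
  have dd2: "degree g2 \<le> degree (\<sigma> g1)" using dvd_imp_degree_le[OF s21' sg1nz] .
  have "degree g2 = degree g1" using dd1 dd2 degsig[of g1] by simp
  obtain w where w: "\<sigma> g1 = g2 * w" using s21' by (auto elim: dvdE)
  have wnz: "w \<noteq> 0" using w sg1nz by auto
  have "degree (\<sigma> g1) = degree g2 + degree w" using w wnz g2nz by (simp add: degree_mult_eq)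
  hence "degree w = 0" using degsig[of g1] \<open>degree g2 = degree g1\<close> by simp
  then obtain c where wc: "w = [:c:]" by (metis degree_eq_zeroE)
  have degeq: "degree g1 = degree P"
    using degF Fk ku \<open>degree g2 = degree g1\<close> knz g1nz g2nz by (simp add: degree_mult_eq)
  have lsig: "lead_coeff (\<sigma> g1) = lead_coeff g1 * (-1)^degree g1"
    unfolding \<sigma>_def by (subst lead_coeff_comp) auto
  have cnz: "c \<noteq> 0" using wc wnz by auto
  have c_eq: "c * lead_coeff g2 = lead_coeff g1 * (-1)^degree P"
    using lsig w wc degeq cnz by (simp add: mult.commute)
  have u_eq: "u * (lead_coeff g1 * lead_coeff g2) = (-1)^degree P"
  proof -
    have unz: "u \<noteq> 0" using ku knz by auto
    have "lead_coeff F = u * lead_coeff (g1 * g2)" using Fk ku unz by simp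
    thus ?thesis using leadF by (simp add: lead_coeff_mult)
  qed
  have p0: "poly g1 0 = c * poly g2 0" using sig0[of g1] w wc by (simp add: mult.commute)
  have "poly P 0 = u * poly g1 0 * poly g2 0" using F0 Fk ku by (simp add: mult.commute mult.left_commute)
  have l1: "lead_coeff g1 \<noteq> 0" "lead_coeff g2 \<noteq> 0" using g1nz g2nz by auto
  have cnz: "c \<noteq> 0" using wc wnz by auto
  have "poly P 0 = (poly g1 0 / lead_coeff g1)^2"
  proof -
    define l1 where "l1 = lead_coeff g1"
    define l2 where "l2 = lead_coeff g2"
    define s where "s = ((-1::'a)^degree P)"
    have ce: "c * l2 = l1 * s" using c_eq l1_def l2_def s_def by simp
    have ue: "u * (l1 * l2) = s" using u_eq l1_def l2_def s_def by simp
    have "u * l1^2 * l2 = c * l2" using ce ue by (simp add: power2_eq_square algebra_simps)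
    hence ul: "u * l1^2 = c" using l1 l2_def by simp
    have "poly P 0 * l1^2 = (u * l1^2) * poly g2 0 * poly g1 0"
      using \<open>poly P 0 = u * poly g1 0 * poly g2 0\<close> by (simp add: algebra_simps)
    also have "\<dots> = poly g1 0 ^ 2" using ul p0 by (simp add: power2_eq_square)
    finally have "poly P 0 * l1^2 = poly g1 0 ^ 2" .
    moreover have "l1 \<noteq> 0" using l1 l1_def by simp
    ultimately have "poly P 0 = poly g1 0 ^ 2 / l1^2" by (simp add: eq_divide_eq)
    thus ?thesis unfolding l1_def[symmetric] by (simp add: power_divide)
  qed
  thus ?thesis by (rule exI)
qed



definition D :: "nat \<Rightarrow> 'a::field poly set" where "D m = {g. g = 0 \<or> degree g < m}"

lemma pCons_D: "pCons a g \<in> D (Suc m) \<longleftrightarrow> g \<in> D m"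
  unfolding D_def by (cases "g = 0") auto

lemma card_D: "finite (D m :: 'a::{finite,field} poly set) \<and> card (D m :: 'a poly set) = card (UNIV::'a set)^m"
proof (induct m)
  case 0
  have "D 0 = {0::'a poly}" unfolding D_def by auto
  thus ?case by simp
next
  case (Suc m)
  have img: "D (Suc m) = (\<lambda>(a,g). pCons a g) ` ((UNIV::'a set) \<times> (D m :: 'a poly set))"
  proof (rule set_eqI)
    fix p :: "'a poly"
    show "p \<in> D (Suc m) \<longleftrightarrow> p \<in> (\<lambda>(a,g). pCons a g) ` (UNIV \<times> D m)"
    proof (cases p rule: pCons_cases)
      case (pCons a g)
      show ?thesis unfolding pCons pCons_D by (auto simp: pCons_eq_iff)
    qed
  qed
  have inj: "inj_on (\<lambda>(a,g). pCons a (g::'a poly)) ((UNIV::'a set) \<times> D m)"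
    by (auto simp: inj_on_def)
  have "card (D (Suc m) :: 'a poly set) = card ((UNIV::'a set) \<times> (D m :: 'a poly set))"
    unfolding img by (rule card_image[OF inj])
  also have "\<dots> = card (UNIV::'a set) * card (UNIV::'a set)^m" using Suc by (simp add: card_cartesian_product)
  finally show ?case using Suc img by simp
qed

lemma finite_D[simp]: "finite (D m :: 'a::{finite,field} poly set)" using card_D by blast

lemma D_mod: "(M::'a::field poly) \<noteq> 0 \<Longrightarrow> f mod M \<in> D (degree M)"
  unfolding D_def using degree_mod_less by blast

lemma D_mod_id: "(g::'a::field poly) \<in> D (degree M) \<Longrightarrow> g mod M = g"
  unfolding D_def by (auto intro: mod_poly_less)

lemma D_eq: "(g::'a::field poly) \<in> D (degree M) \<Longrightarrow> g' \<in> D (degree M) \<Longrightarrow> M dvd g - g' \<Longrightarrow> g = g'"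
  using D_mod_id mod_eq_dvd_iff by metis

lemma D_mono: "m \<le> n \<Longrightarrow> D m \<subseteq> D n" unfolding D_def by auto

lemma D_uminus: "(g::'a::field poly) \<in> D m \<Longrightarrow> -g \<in> D m" unfolding D_def by auto

lemma fiber_count:
  fixes M1 M2 :: "'a::{finite,field} poly"
  assumes nz: "M1 \<noteq> 0" "M2 \<noteq> 0" and per: "\<And>g. S g = S (g mod M1)"
  shows "card {r \<in> D (degree M1 + degree M2). S r} = card {a \<in> D (degree M1). S a} * card (UNIV::'a set)^degree M2"
proof -
  define \<phi> where "\<phi> = (\<lambda>(a::'a poly, b). a + M1 * b)"
  have inj: "inj_on \<phi> (D (degree M1) \<times> D (degree M2))"
  proof (rule inj_onI, clarify)
    fix a b a' b' :: "'a poly" assume a: "a \<in> D (degree M1)" "b \<in> D (degree M2)" "a' \<in> D (degree M1)" "b' \<in> D (degree M2)"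
      and eq: "\<phi> (a, b) = \<phi> (a', b')"
    have e: "a - a' = M1 * (b' - b)" using eq by (simp add: \<phi>_def algebra_simps)
    hence "M1 dvd a - a'" by simp
    hence "a = a'" using D_eq a by blast
    thus "a = a' \<and> b = b'" using e nz by simp
  qed
  have into: "\<phi> ` (D (degree M1) \<times> D (degree M2)) \<subseteq> D (degree M1 + degree M2)"
  proof clarify
    fix a b :: "'a poly" assume a: "a \<in> D (degree M1)" "b \<in> D (degree M2)"
    show "\<phi> (a, b) \<in> D (degree M1 + degree M2)"
    proof (cases "b = 0")
      case True thus ?thesis using a D_mono[of "degree M1" "degree M1 + degree M2"] by (auto simp: \<phi>_def)
    next
      case False
      have db: "degree b < degree M2" using a False by (auto simp: D_def)
      have "degree (M1 * b) = degree M1 + degree b" using nz False by (simp add: degree_mult_eq)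
      moreover have "degree (a + M1 * b) \<le> max (degree a) (degree (M1*b))" by (rule degree_add_le_max)
      moreover have "degree a \<le> degree M1 \<or> a = 0" using a by (auto simp: D_def)
      ultimately have "degree (a + M1 * b) < degree M1 + degree M2" using db by auto
      thus ?thesis by (simp add: \<phi>_def D_def)
    qed
  qed
  have full: "\<phi> ` (D (degree M1) \<times> D (degree M2)) = D (degree M1 + degree M2)"
  proof (rule card_subset_eq[OF _ into])
    show "finite (D (degree M1 + degree M2) :: 'a poly set)" by simp
    have "card (\<phi> ` (D (degree M1) \<times> D (degree M2))) = card ((D (degree M1) :: 'a poly set) \<times> (D (degree M2) :: 'a poly set))"
      by (rule card_image[OF inj])
    also have "\<dots> = card (UNIV::'a set)^(degree M1 + degree M2)" by (simp add: card_cartesian_product card_D power_add)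
    finally show "card (\<phi> ` (D (degree M1) \<times> D (degree M2))) = card (D (degree M1 + degree M2) :: 'a poly set)"
      by (simp add: card_D)
  qed
  have Sphi: "S (\<phi> (a, b)) = S a" if "a \<in> D (degree M1)" for a b :: "'a poly"
  proof -
    have "\<phi> (a, b) mod M1 = a mod M1" by (simp add: \<phi>_def)
    thus ?thesis using per[of "\<phi> (a,b)"] per[of a] by simp
  qed
  have eqset: "{r \<in> D (degree M1 + degree M2). S r} = \<phi> ` ({a \<in> D (degree M1). S a} \<times> D (degree M2))"
  proof (rule set_eqI, rule iffI)
    fix r :: "'a poly" assume "r \<in> {r \<in> D (degree M1 + degree M2). S r}"
    hence r: "r \<in> D (degree M1 + degree M2)" "S r" by auto
    then obtain a b where ab: "a \<in> D (degree M1)" "b \<in> D (degree M2)" "r = \<phi> (a, b)"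
      using full by blast
    hence "S a" using Sphi r by simp
    thus "r \<in> \<phi> ` ({a \<in> D (degree M1). S a} \<times> D (degree M2))" using ab by blast
  next
    fix r :: "'a poly" assume "r \<in> \<phi> ` ({a \<in> D (degree M1). S a} \<times> D (degree M2))"
    then obtain a b where ab: "a \<in> D (degree M1)" "S a" "b \<in> D (degree M2)" "r = \<phi> (a, b)" by blast
    hence "r \<in> D (degree M1 + degree M2)" using into by blast
    thus "r \<in> {r \<in> D (degree M1 + degree M2). S r}" using ab Sphi by simp
  qed
  have inj2: "inj_on \<phi> ({a \<in> D (degree M1). S a} \<times> D (degree M2))"
    by (rule inj_on_subset[OF inj]) auto
  show ?thesis unfolding eqset card_image[OF inj2] by (simp add: card_cartesian_product card_D)
qed

lemma card_fib2:
  assumes "finite A" and "\<And>x. x \<in> A \<Longrightarrow> card {y \<in> A. f y = f x} \<le> 2"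
  shows "card A \<le> 2 * card (f ` A)"
proof -
  have "A = (\<Union>z\<in>f ` A. {y \<in> A. f y = z})" by auto
  hence "card A \<le> (\<Sum>z\<in>f ` A. card {y \<in> A. f y = z})"
    using card_UN_le[of "f ` A" "\<lambda>z. {y \<in> A. f y = z}"] assms(1) by simp
  also have "\<dots> \<le> (\<Sum>z\<in>f ` A. 2)"
    by (rule sum_mono) (use assms(2) in auto)
  finally show ?thesis by simp
qed




abbreviation TT :: "'a::field poly" where "TT \<equiv> [:0,1:]"

locale qs =
  fixes P :: "'a::{finite,field} poly"
  assumes oddq: "odd (card (UNIV :: 'a set))" and monic: "lead_coeff P = 1"
    and irr: "irreducible P" and chi: "chi_q P = -1"
begin

lemma two: "(2::'a) \<noteq> 0" using two_nz[OF oddq] .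

lemma P0: "poly P 0 \<noteq> 0" and nsq: "\<not> (\<exists>y. poly P 0 = y^2)"
  using chi unfolding chi_q_def by (auto split: if_splits)

lemma Pnz: "P \<noteq> 0" using monic by auto

lemma degP: "degree P \<ge> 1"
proof (rule ccontr)
  assume "\<not> degree P \<ge> 1"
  hence "degree P = 0" by simp
  hence "is_unit P" using Pnz is_unit_iff_degree by blast
  thus False using irr irreducible_not_unit by blast
qed

lemma prime: "P dvd a * b \<Longrightarrow> P dvd a \<or> P dvd b" using irr_prime[OF irr] .

lemma PT: "\<not> P dvd TT"
proof
  assume "P dvd TT"
  then obtain k where k: "TT = P * k" by (auto elim: dvdE)
  have knz: "k \<noteq> 0" using k by auto
  have "degree (TT::'a poly) = degree (P * k)" by (simp only: k[symmetric])
  also have "\<dots> = degree P + degree k" using Pnz knz by (rule degree_mult_eq)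
  finally have "degree (TT::'a poly) = degree P + degree k" .
  hence "degree k = 0" using degP by simp
  then obtain c where "k = [:c:]" by (metis degree_eq_zeroE)
  hence "poly (TT::'a poly) 0 = poly P 0 * c" using k by simp
  hence "poly P 0 * c = 0" by simp
  moreover have "c \<noteq> 0" using knz \<open>k = [:c:]\<close> by auto
  ultimately show False using P0 by simp
qed

lemma nosq: "\<not> P dvd C^2 + TT"
  using sq_lemma[OF two monic P0] nsq by blast

lemma P_dvd_two: "P dvd smult 2 a \<Longrightarrow> P dvd a"
  using two by (metis dvd_smult_cancel)

lemma key: assumes "P dvd A^2 + TT * B^2" shows "P dvd A \<and> P dvd B"
proof -
  have PB: "P dvd B"
  proof (rule ccontr)
    assume "\<not> P dvd B"
    then obtain u v where uv: "u*P + v*B = 1" using irr_bez[OF irr] by blast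
    define C where "C = A * v"
    have "C^2 + TT = v^2 * (A^2 + TT*B^2) + TT * (1 - (v*B)^2)"
      by (simp add: C_def algebra_simps power2_eq_square)
    moreover have e2: "1 - (v*B)^2 = (u*P)*(1 + v*B)"
    proof -
      have h1: "1 - v*B = u*P" using uv by (metis add_diff_cancel_right')
      have "1 - (v*B)^2 = (1 - v*B)*(1+v*B)" by (simp add: algebra_simps power2_eq_square)
      thus ?thesis using h1 by simp
    qed
    ultimately have "C^2 + TT = v^2 * (A^2 + TT*B^2) + P * (TT * u * (1 + v*B))"
      by (simp add: algebra_simps)
    hence "P dvd C^2 + TT" using assms by (metis dvd_add dvd_mult dvd_triv_left)
    thus False using nosq by blast
  qed
  hence "P dvd TT * B^2" unfolding power2_eq_square by (metis dvd_mult dvd_mult2)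
  hence "P dvd A^2" using assms by (metis dvd_add_left_iff add.commute)
  hence "P dvd A" using prime by (metis power2_eq_square)
  thus ?thesis using PB by simp
qed

definition R :: "nat \<Rightarrow> 'a poly \<Rightarrow> bool" where "R n g \<longleftrightarrow> g mod P^n \<in> Aq (P^n)"

lemma R_iff: "R n g \<longleftrightarrow> (\<exists>A B. P^n dvd g - (A^2 + TT * B^2))"
  unfolding R_def Aq_def by (auto simp: mod_eq_dvd_iff)

lemma R_per: "R n g = R n (g mod P^n)"
  unfolding R_def by simp

lemma R0: "R 0 g" unfolding R_iff by simp

end



lemma sm2: "smult 2 p = p + (p::'a::field poly)"
  by (metis one_add_one smult_add_left smult_1_left)

lemma sq_expand: "(A + X)^2 = A^2 + X * smult 2 A + X^2" for A X :: "'a::field poly"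
  by (simp add: sm2 power2_eq_square algebra_simps)

context qs begin

lemma R1_all: "\<exists>A B. P dvd g - (A^2 + TT*B^2)"
proof -
  define Dd where "Dd = (D (degree P) :: 'a poly set)"
  define f where "f = (\<lambda>A::'a poly. A^2 mod P)"
  define D' where "D' = Dd - {0}"
  define Q where "Q = card (UNIV::'a set) ^ degree P"
  have finDd: "finite Dd" unfolding Dd_def by simp
  have cDd: "card Dd = Q" unfolding Dd_def Q_def using card_D by blast
  have z: "0 \<in> Dd" unfolding Dd_def D_def by simp
  have cD': "card D' = Q - 1" unfolding D'_def using cDd z finDd by simp
  have fib: "card {y \<in> D'. f y = f x} \<le> 2" if x: "x \<in> D'" for x
  proof -
    have "{y \<in> D'. f y = f x} \<subseteq> {x, -x}"
    proof
      fix y assume y: "y \<in> {y \<in> D'. f y = f x}"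
      hence "y^2 mod P = x^2 mod P" unfolding f_def by simp
      hence "P dvd y^2 - x^2" by (simp add: mod_eq_dvd_iff)
      moreover have "y^2 - x^2 = (y - x) * (y - (-x))" by (simp add: algebra_simps power2_eq_square)
      ultimately have "P dvd y - x \<or> P dvd y - (-x)" using prime by metis
      moreover have "y \<in> Dd" "x \<in> Dd" "-x \<in> Dd" using x y D_uminus unfolding D'_def Dd_def by auto
      ultimately have "y = x \<or> y = -x" using D_eq unfolding Dd_def by metis
      thus "y \<in> {x, -x}" by simp
    qed
    hence "card {y \<in> D'. f y = f x} \<le> card {x, -x}" by (rule card_mono[rotated]) simp
    also have "\<dots> \<le> 2" by (simp add: card_insert_if)
    finally show ?thesis .
  qed
  have c1: "card D' \<le> 2 * card (f ` D')"
    by (rule card_fib2) (use finDd fib in \<open>auto simp: D'_def\<close>)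
  have n0: "0 \<notin> f ` D'"
  proof
    assume "0 \<in> f ` D'"
    then obtain x where x: "x \<in> D'" "x^2 mod P = 0" unfolding f_def by auto
    hence "P dvd x * x" by (simp add: power2_eq_square mod_eq_0_iff_dvd)
    hence "P dvd x - 0" using prime by auto
    hence "x = 0" using D_eq[of x P 0] x(1) z unfolding D'_def Dd_def by auto
    thus False using x(1) unfolding D'_def by simp
  qed
  have fDd: "f ` Dd = insert 0 (f ` D')"
  proof -
    have "Dd = insert 0 D'" using z unfolding D'_def by auto
    hence "f ` Dd = insert (f 0) (f ` D')" by simp
    moreover have "f 0 = 0" by (simp add: f_def)
    ultimately show ?thesis by simp
  qed
  have cf: "card (f ` Dd) = card (f ` D') + 1" unfolding fDd using n0 finDd D'_def by simp
  have oQ: "odd Q" unfolding Q_def using oddq by simp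
  have Qpos: "Q \<ge> 1" using oQ by (cases Q) auto
  have big: "2 * card (f ` Dd) \<ge> Q + 1" using c1 cD' cf oQ Qpos by simp
  have fsub: "f ` Dd \<subseteq> Dd" unfolding f_def Dd_def using D_mod Pnz by blast
  define \<psi> where "\<psi> = (\<lambda>y. (g - TT*y) mod P)"
  have injpsi: "inj_on \<psi> Dd"
  proof (rule inj_onI)
    fix y y' assume yy: "y \<in> Dd" "y' \<in> Dd" "\<psi> y = \<psi> y'"
    hence "P dvd (g - TT*y) - (g - TT*y')" unfolding \<psi>_def by (simp add: mod_eq_dvd_iff)
    moreover have "(g - TT*y) - (g - TT*y') = TT * (y' - y)" by (simp add: algebra_simps)
    ultimately have "P dvd TT * (y' - y)" by simp
    hence "P dvd y' - y" using prime PT by blast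
    thus "y = y'" using D_eq yy unfolding Dd_def by metis
  qed
  define S2 where "S2 = \<psi> ` (f ` Dd)"
  have cS2: "card S2 = card (f ` Dd)" unfolding S2_def
    by (rule card_image) (rule inj_on_subset[OF injpsi fsub])
  have S2sub: "S2 \<subseteq> Dd" unfolding S2_def \<psi>_def Dd_def using D_mod Pnz by blast
  have "f ` Dd \<inter> S2 \<noteq> {}"
  proof
    assume e: "f ` Dd \<inter> S2 = {}"
    have "card (f ` Dd \<union> S2) = card (f ` Dd) + card S2"
      using card_Un_disjoint[of "f ` Dd" S2] e finDd S2sub fsub by (meson finite_subset)
    moreover have "card (f ` Dd \<union> S2) \<le> card Dd" using fsub S2sub finDd by (intro card_mono) auto
    ultimately show False using big cS2 cDd by simp
  qed
  then obtain A y where A: "A \<in> Dd" "y \<in> Dd" "f A = \<psi> (f y)" unfolding S2_def using fsub by blast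
  have h1: "P dvd A^2 - (g - TT * (y^2 mod P))" using A(3) unfolding f_def \<psi>_def by (simp add: mod_eq_dvd_iff)
  have h2: "P dvd (y^2 mod P) - y^2" using mod_eq_dvd_iff[of "y^2 mod P" P "y^2"] by simp
  have "g - (A^2 + TT*y^2) = - (A^2 - (g - TT * (y^2 mod P))) + TT * ((y^2 mod P) - y^2)"
    by (simp add: algebra_simps)
  hence "P dvd g - (A^2 + TT*y^2)" using h1 h2 by (metis dvd_add dvd_minus_iff dvd_mult)
  thus ?thesis by blast
qed

end



context qs begin

lemma lift:
  assumes ng: "\<not> P dvd g" and n: "n \<ge> 1" and h: "P^n dvd g - (A^2 + TT*B^2)"
  shows "\<exists>A' B'. P^(Suc n) dvd g - (A'^2 + TT*B'^2)"
proof -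
  obtain E where E: "g - (A^2+TT*B^2) = P^n * E" using h by (auto elim: dvdE)
  hence gE: "g = A^2 + TT*B^2 + P^n*E" by (simp add: algebra_simps)
  have d1: "P^(Suc n) dvd P^n * P" by simp
  have d2: "P^(Suc n) dvd P^n * P^n"
  proof -
    have "P^(Suc n) dvd P^(n+n)" using n by (intro le_imp_power_dvd) simp
    thus ?thesis by (simp add: power_add)
  qed
  show ?thesis
  proof (cases "P dvd A")
    case False
    have "\<not> P dvd smult 2 A" using P_dvd_two False by blast
    then obtain u v where uv: "u*P + v*(smult 2 A) = 1" using irr_bez[OF irr] by blast
    define C where "C = v*E"
    have "g - ((A + P^n*C)^2 + TT*B^2) = P^n*E*(1 - v*smult 2 A) - (P^n*P^n)*C^2"
      unfolding gE sq_expand by (simp add: C_def algebra_simps power2_eq_square)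
    also have "1 - v*smult 2 A = u*P" using uv by (metis add_diff_cancel_right')
    finally have eq: "g - ((A + P^n*C)^2 + TT*B^2) = (P^n * P) * (E*u) - (P^n*P^n)*C^2"
      by (simp add: algebra_simps)
    have "P^(Suc n) dvd g - ((A + P^n*C)^2 + TT*B^2)" unfolding eq
      using d1 d2 by (metis dvd_diff dvd_mult2)
    thus ?thesis by blast
  next
    case True
    have nB: "\<not> P dvd B"
    proof
      assume "P dvd B"
      hence "P dvd A^2 + TT*B^2" using True unfolding power2_eq_square by (metis dvd_add dvd_mult dvd_mult2)
      moreover have "P dvd P^n * E"
      proof -
        obtain m where "n = Suc m" using n by (cases n) auto
        thus ?thesis by simp
      qed
      ultimately have "P dvd g" unfolding gE by (metis dvd_add)
      thus False using ng by simp
    qed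
    have "\<not> P dvd smult 2 (TT*B)"
    proof
      assume "P dvd smult 2 (TT*B)"
      hence "P dvd TT*B" using P_dvd_two by blast
      thus False using prime PT nB by blast
    qed
    then obtain u v where uv: "u*P + v*(smult 2 (TT*B)) = 1" using irr_bez[OF irr] by blast
    define C where "C = v*E"
    have "g - (A^2 + TT*(B + P^n*C)^2) = P^n*E*(1 - v*smult 2 (TT*B)) - (P^n*P^n)*(TT*C^2)"
      unfolding gE sq_expand by (simp add: C_def algebra_simps power2_eq_square)
    also have "1 - v*smult 2 (TT*B) = u*P" using uv by (metis add_diff_cancel_right')
    finally have eq: "g - (A^2 + TT*(B + P^n*C)^2) = (P^n * P) * (E*u) - (P^n*P^n)*(TT*C^2)"
      by (simp add: algebra_simps)
    have "P^(Suc n) dvd g - (A^2 + TT*(B + P^n*C)^2)" unfolding eq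
      using d1 d2 by (metis dvd_diff dvd_mult2)
    thus ?thesis by blast
  qed
qed

lemma unitR: assumes "\<not> P dvd g" shows "R n g"
proof -
  have "\<exists>A B. P^n dvd g - (A^2 + TT*B^2)"
  proof (induct n)
    case 0 show ?case by simp
  next
    case (Suc n)
    show ?case
    proof (cases "n = 0")
      case True thus ?thesis using R1_all by simp
    next
      case False
      then obtain A B where "P^n dvd g - (A^2 + TT*B^2)" using Suc by blast
      thus ?thesis using lift[OF assms] False by simp
    qed
  qed
  thus ?thesis unfolding R_iff .
qed

lemma sq_split: assumes "P dvd A" "P dvd B" shows "P^2 dvd A^2 + TT*B^2"
proof -
  obtain a where a: "A = P*a" using assms(1) by (auto elim: dvdE)
  obtain b where b: "B = P*b" using assms(2) by (auto elim: dvdE)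
  have "A^2 + TT*B^2 = P^2 * (a^2 + TT*b^2)" unfolding a b by (simp add: algebra_simps power2_eq_square)
  thus ?thesis by simp
qed

lemma oddR: assumes "P dvd g" "\<not> P^2 dvd g" "n \<ge> 2" shows "\<not> R n g"
proof
  assume "R n g"
  then obtain A B where h: "P^n dvd g - (A^2 + TT*B^2)" unfolding R_iff by blast
  have p2: "P^2 dvd P^n" using assms(3) by (rule le_imp_power_dvd)
  have p1: "P dvd P^2" by (simp add: power2_eq_square)
  have h3: "P dvd g - (A^2 + TT*B^2)" using h p1 p2 by (metis dvd_trans)
  have "P dvd A^2 + TT*B^2" using dvd_diff[OF assms(1) h3] by simp
  hence "P dvd A \<and> P dvd B" by (rule key)
  hence "P^2 dvd A^2 + TT*B^2" using sq_split by blast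
  moreover have "P^2 dvd g - (A^2 + TT*B^2)" using h p2 by (metis dvd_trans)
  ultimately have "P^2 dvd (g - (A^2 + TT*B^2)) + (A^2 + TT*B^2)" by (rule dvd_add[rotated])
  hence "P^2 dvd g" by simp
  thus False using assms(2) by simp
qed

lemma descR: assumes g: "P^2 dvd g" and n: "n \<ge> 2" shows "R n g \<longleftrightarrow> R (n-2) (g div P^2)"
proof -
  define g' where "g' = g div P^2"
  have gg: "g = P^2 * g'" unfolding g'_def using g by simp
  have Pn: "P^n = P^2 * P^(n-2)" using n by (metis le_add_diff_inverse power_add)
  have P2nz: "P^2 \<noteq> 0" using Pnz by simp
  show ?thesis unfolding g'_def[symmetric]
  proof
    assume "R n g"
    then obtain A B where h: "P^n dvd g - (A^2 + TT*B^2)" unfolding R_iff by blast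
    have p2: "P^2 dvd P^n" using n by (rule le_imp_power_dvd)
    have p1: "P dvd P^2" by (simp add: power2_eq_square)
    have h3: "P dvd g - (A^2 + TT*B^2)" using h p1 p2 by (metis dvd_trans)
    have h4: "P dvd g" using g p1 by (metis dvd_trans)
    have "P dvd A^2 + TT*B^2" using dvd_diff[OF h4 h3] by simp
    hence "P dvd A \<and> P dvd B" by (rule key)
    then obtain a b where a: "A = P*a" and b: "B = P*b" by (auto elim!: dvdE)
    have "g - (A^2 + TT*B^2) = P^2 * (g' - (a^2 + TT*b^2))"
      unfolding gg a b by (simp add: algebra_simps power2_eq_square)
    hence "P^2 * P^(n-2) dvd P^2 * (g' - (a^2 + TT*b^2))" using h Pn by simp
    hence "P^(n-2) dvd g' - (a^2 + TT*b^2)" using P2nz by simp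
    thus "R (n-2) g'" unfolding R_iff by blast
  next
    assume "R (n-2) g'"
    then obtain a b where h: "P^(n-2) dvd g' - (a^2 + TT*b^2)" unfolding R_iff by blast
    have "g - ((P*a)^2 + TT*(P*b)^2) = P^2 * (g' - (a^2 + TT*b^2))"
      unfolding gg by (simp add: algebra_simps power2_eq_square)
    moreover have "P^2 * P^(n-2) dvd P^2 * (g' - (a^2 + TT*b^2))" using h by simp
    ultimately have "P^n dvd g - ((P*a)^2 + TT*(P*b)^2)" using Pn by simp
    thus "R n g" unfolding R_iff by blast
  qed
qed

lemma R1: "R 1 g" using R1_all unfolding R_iff by simp

lemma Rstep: "\<not> P^n dvd g \<Longrightarrow> R (Suc n) g = R n g"
proof (induct n arbitrary: g rule: less_induct)
  case (less n)
  show ?case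
  proof (cases "P dvd g")
    case False thus ?thesis using unitR by blast
  next
    case Pg: True
    have n2: "n \<ge> 2"
    proof (rule ccontr)
      assume "\<not> n \<ge> 2"
      hence "n = 0 \<or> n = 1" by auto
      thus False using less.prems Pg by auto
    qed
    show ?thesis
    proof (cases "P^2 dvd g")
      case False thus ?thesis using oddR Pg n2 by simp
    next
      case True
      define g' where "g' = g div P^2"
      have gg: "g = P^2 * g'" unfolding g'_def using True by simp
      have nd: "\<not> P^(n-2) dvd g'"
      proof
        assume "P^(n-2) dvd g'"
        hence "P^2 * P^(n-2) dvd g" unfolding gg by simp
        moreover have "P^2 * P^(n-2) = P^n" using n2 by (metis le_add_diff_inverse power_add)
        ultimately show False using less.prems by simp
      qed
      have e1: "R (Suc n) g = R (Suc n - 2) g'" using descR[OF True] n2 g'_def by simp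
      have e2: "R n g = R (n - 2) g'" using descR[OF True n2] g'_def by simp
      have "R (Suc (n-2)) g' = R (n-2) g'" using less.hyps[of "n-2" g'] nd n2 by simp
      moreover have "Suc n - 2 = Suc (n - 2)" using n2 by simp
      ultimately show ?thesis using e1 e2 by simp
    qed
  qed
qed

end



context qs begin

definition Q :: nat where "Q = card (UNIV::'a set) ^ degree P"
definition cnt :: "nat \<Rightarrow> ('a poly \<Rightarrow> bool) \<Rightarrow> nat" where
  "cnt n S = card {r \<in> D (degree P * n). S r}"

lemma degPn: "degree (P^n) = degree P * n" using degree_power_eq[OF Pnz, of n] by simp

lemma cnt_per:
  assumes mn: "m \<le> n" and per: "\<And>g. S g = S (g mod P^m)"
  shows "cnt n S = Q^(n-m) * cnt m S"
proof -
  have nz: "P^m \<noteq> 0" "P^(n-m) \<noteq> 0" using Pnz by auto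
  have dsum: "degree (P^m) + degree (P^(n-m)) = degree P * n"
    unfolding degPn using mn by (simp add: add_mult_distrib2[symmetric])
  have "cnt n S = card {a \<in> D (degree (P^m)). S a} * card (UNIV::'a set) ^ degree (P^(n-m))"
    unfolding cnt_def dsum[symmetric] by (rule fiber_count[of "P^m" "P^(n-m)" S]) (use nz per in auto)
  also have "card (UNIV::'a set) ^ degree (P^(n-m)) = Q^(n-m)"
    unfolding degPn Q_def by (simp add: power_mult)
  finally show ?thesis unfolding cnt_def degPn by simp
qed

lemma cnt_shift:
  assumes per: "\<And>g. S g = S (g mod P^n)"
  shows "cnt n (\<lambda>r. S (r + h)) = cnt n S"
proof -
  define M where "M = P^n"
  have Mnz: "M \<noteq> 0" using Pnz M_def by simp
  have DM: "D (degree P * n) = (D (degree M) :: 'a poly set)" unfolding M_def degPn ..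
  define A where "A = {r \<in> D (degree M). S (r + h)}"
  define B where "B = {r \<in> D (degree M). S r}"
  have fin: "finite A" "finite B" unfolding A_def B_def by auto
  have le1: "card A \<le> card B"
  proof (rule card_inj_on_le[of "\<lambda>r. (r + h) mod M"])
    show "inj_on (\<lambda>r. (r + h) mod M) A"
    proof (rule inj_onI)
      fix x y assume xy: "x \<in> A" "y \<in> A" "(x + h) mod M = (y + h) mod M"
      hence "M dvd (x + h) - (y + h)" by (simp add: mod_eq_dvd_iff)
      hence "M dvd x - y" by simp
      thus "x = y" using D_eq xy unfolding A_def by blast
    qed
    show "(\<lambda>r. (r + h) mod M) ` A \<subseteq> B"
      unfolding A_def B_def using D_mod[OF Mnz] per M_def by auto
  qed (use fin in auto)
  have le2: "card B \<le> card A"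
  proof (rule card_inj_on_le[of "\<lambda>r. (r - h) mod M"])
    show "inj_on (\<lambda>r. (r - h) mod M) B"
    proof (rule inj_onI)
      fix x y assume xy: "x \<in> B" "y \<in> B" "(x - h) mod M = (y - h) mod M"
      hence "M dvd (x - h) - (y - h)" by (simp add: mod_eq_dvd_iff)
      hence "M dvd x - y" by simp
      thus "x = y" using D_eq xy unfolding B_def by blast
    qed
    show "(\<lambda>r. (r - h) mod M) ` B \<subseteq> A"
    proof clarify
      fix r assume r: "r \<in> B"
      have "((r - h) mod M + h) mod M = r mod M" by (simp add: mod_add_left_eq)
      hence "S ((r - h) mod M + h) = S r" using per[of "(r - h) mod M + h"] per[of r] M_def by simp
      thus "(r - h) mod M \<in> A" using r D_mod[OF Mnz] unfolding A_def B_def by auto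
    qed
  qed (use fin in auto)
  show ?thesis unfolding cnt_def DM using le1 le2 A_def B_def by simp
qed

lemma per_dvd: "j \<le> n \<Longrightarrow> (P^j dvd g) = (P^j dvd g mod P^n)"
  by (metis dvd_mod_iff le_imp_power_dvd)

lemma cnt_dvd0: assumes "j \<le> n" shows "cnt n (\<lambda>r. P^j dvd r) = Q^(n-j)"
proof -
  have F1: "cnt n (\<lambda>r. P^j dvd r) = Q^(n-j) * cnt j (\<lambda>r. P^j dvd r)"
    by (rule cnt_per[OF assms]) (rule per_dvd, simp)
  moreover have SE: "{r \<in> D (degree P * j). P^j dvd r} = {0}"
  proof
    show "{r \<in> D (degree P * j). P^j dvd r} \<subseteq> {0}"
    proof clarify
      fix r :: "'a poly" assume r: "r \<in> D (degree P * j)" "P^j dvd r"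
      have z: "0 \<in> D (degree (P^j))" by (simp add: D_def)
      show "r = 0" using D_eq[of r "P^j" 0] r z unfolding degPn by simp
    qed
  next
    have "(0::'a poly) \<in> D (degree P * j)" by (simp add: D_def)
    thus "{0} \<subseteq> {r \<in> D (degree P * j). P^j dvd r}" by simp
  qed
  have "cnt j (\<lambda>r. P^j dvd r) = card {0::'a poly}" unfolding cnt_def SE ..
  hence F2: "cnt j (\<lambda>r. P^j dvd r) = 1" by simp
  show ?thesis unfolding F1 F2 by (rule mult_1_right)
qed

lemma cnt_dvd: assumes "j \<le> n" shows "cnt n (\<lambda>r. P^j dvd r + h) = Q^(n-j)"
proof -
  have "cnt n (\<lambda>r. P^j dvd r + h) = cnt n (\<lambda>r. P^j dvd r)"
    by (rule cnt_shift[of "\<lambda>r. P^j dvd r"]) (rule per_dvd[OF assms])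
  thus ?thesis using cnt_dvd0[OF assms] by simp
qed

lemma cnt_all: "cnt n (\<lambda>_. True) = Q^n"
proof -
  have "card (D (degree P * n) :: 'a poly set) = card (UNIV::'a set) ^ (degree P * n)" using card_D by blast
  thus ?thesis unfolding cnt_def Q_def by (simp add: power_mult)
qed

lemma cnt_compl: "cnt n (\<lambda>r. \<not> S r) = Q^n - cnt n S"
proof -
  have "{r \<in> D (degree P * n). \<not> S r} = D (degree P * n) - {r \<in> D (degree P * n). S r}" by auto
  hence "cnt n (\<lambda>r. \<not> S r) = card (D (degree P * n) :: 'a poly set) - cnt n S"
    unfolding cnt_def by (simp add: card_Diff_subset)
  thus ?thesis using cnt_all unfolding cnt_def by simp
qed

lemma cnt_mono: "(\<And>r. S r \<Longrightarrow> S' r) \<Longrightarrow> cnt n S \<le> cnt n S'"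
  unfolding cnt_def by (rule card_mono) auto

definition a :: "nat \<Rightarrow> nat" where "a n = cnt n (R n)"

lemma a_rec: "a (n+2) = (Q^(n+2) - Q^(n+1)) + a n"
proof -
  define Dm where "Dm = (D (degree P * (n+2)) :: 'a poly set)"
  define X1 where "X1 = {r \<in> Dm. \<not> P dvd r}"
  define X2 where "X2 = {r \<in> Dm. P^2 dvd r \<and> R (n+2) r}"
  have split: "{r \<in> Dm. R (n+2) r} = X1 \<union> X2"
  proof (rule set_eqI)
    fix r
    show "r \<in> {r \<in> Dm. R (n+2) r} \<longleftrightarrow> r \<in> X1 \<union> X2"
      unfolding X1_def X2_def using unitR oddR[of r "n+2"] by auto
  qed
  have disj: "X1 \<inter> X2 = {}" unfolding X1_def X2_def
    by (auto simp: power2_eq_square intro: dvd_mult_left)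
  have fin: "finite X1" "finite X2" unfolding X1_def X2_def Dm_def by auto
  have c1: "card X1 = Q^(n+2) - Q^(n+1)"
  proof -
    have "card X1 = cnt (n+2) (\<lambda>r. \<not> P^1 dvd r)" unfolding X1_def Dm_def cnt_def by simp
    also have "\<dots> = Q^(n+2) - cnt (n+2) (\<lambda>r. P^1 dvd r)" by (rule cnt_compl)
    also have "cnt (n+2) (\<lambda>r. P^1 dvd r) = Q^(n+1)" using cnt_dvd0[of 1 "n+2"] by simp
    finally show ?thesis .
  qed
  have c2: "card X2 = a n"
  proof -
    define Y where "Y = {s \<in> D (degree P * n). R n s}"
    have P2nz: "P^2 \<noteq> 0" using Pnz by simp
    have dP2: "degree (P^2) = 2 * degree P" using degPn[of 2] by simp
    have inj: "inj_on (\<lambda>s. P^2 * s) Y" using P2nz by (auto simp: inj_on_def)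
    have img: "(\<lambda>s. P^2 * s) ` Y = X2"
    proof (rule set_eqI, rule iffI)
      fix r assume "r \<in> (\<lambda>s. P^2 * s) ` Y"
      then obtain s where s: "s \<in> D (degree P * n)" "R n s" "r = P^2 * s" unfolding Y_def by auto
      have "r \<in> Dm"
      proof (cases "s = 0")
        case True thus ?thesis using s by (simp add: Dm_def D_def)
      next
        case False
        have "degree r = 2 * degree P + degree s" using s(3) P2nz False dP2 by (simp add: degree_mult_eq)
        moreover have "degree s < degree P * n" using s(1) False by (simp add: D_def)
        ultimately show ?thesis by (simp add: Dm_def D_def algebra_simps)
      qed
      moreover have "R (n+2) r" using descR[of r "n+2"] s P2nz by simp
      ultimately show "r \<in> X2" unfolding X2_def using s(3) by simp
    next
      fix r assume r: "r \<in> X2"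
      hence r1: "r \<in> Dm" "P^2 dvd r" "R (n+2) r" unfolding X2_def by auto
      define s where "s = r div P^2"
      have rs: "r = P^2 * s" unfolding s_def using r1(2) by simp
      have "s \<in> D (degree P * n)"
      proof (cases "s = 0")
        case True thus ?thesis by (simp add: D_def)
      next
        case False
        hence "r \<noteq> 0" using rs P2nz by simp
        hence "degree r < degree P * (n+2)" using r1(1) by (simp add: Dm_def D_def)
        moreover have "degree r = 2 * degree P + degree s" using rs P2nz False dP2 by (simp add: degree_mult_eq)
        ultimately show ?thesis by (simp add: D_def algebra_simps)
      qed
      moreover have "R n s" using descR[OF r1(2), of "n+2"] r1(3) s_def by simp
      ultimately show "r \<in> (\<lambda>s. P^2 * s) ` Y" unfolding Y_def using rs by blast
    qed
    have "card X2 = card Y" unfolding img[symmetric] by (rule card_image[OF inj])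
    thus ?thesis unfolding Y_def a_def cnt_def by simp
  qed
  have "a (n+2) = card {r \<in> Dm. R (n+2) r}" unfolding a_def cnt_def Dm_def by simp
  also have "\<dots> = card X1 + card X2" unfolding split using card_Un_disjoint[OF fin disj] .
  finally show ?thesis using c1 c2 by simp
qed

lemma a0: "a 0 = 1"
proof -
  have "R 0 = (\<lambda>_. True)" by (rule ext) (simp add: R0)
  thus ?thesis unfolding a_def using cnt_all[of 0] by simp
qed
lemma a1: "a 1 = Q"
proof -
  have "R 1 = (\<lambda>_. True)" by (rule ext, rule eqTrueI, rule R1)
  thus ?thesis unfolding a_def using cnt_all[of 1] by simp
qed

end



context qs begin

definition G :: "'a poly list \<Rightarrow> nat \<Rightarrow> 'a poly \<Rightarrow> bool" where
  "G h n r \<longleftrightarrow> (\<forall>i<length h. R n (r + h!i))"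

definition c :: "'a poly list \<Rightarrow> nat \<Rightarrow> nat" where "c h n = cnt n (G h n)"

lemma R_shift_per: "R n (g + x) = R n (g mod P^n + x)"
proof -
  have "(g + x) mod P^n = (g mod P^n + x) mod P^n" by (simp add: mod_add_left_eq)
  thus ?thesis using R_per[of n "g + x"] R_per[of n "g mod P^n + x"] by simp
qed

lemma G_per: "G h n g = G h n (g mod P^n)"
  unfolding G_def using R_shift_per by presburger

lemma Aqh_card: "card (Aqh (P^n) h) = c h n"
proof -
  have "Aqh (P^n) h = {r \<in> D (degree P * n). G h n r}"
  proof (rule set_eqI, rule iffI)
    fix x assume "x \<in> Aqh (P^n) h"
    then obtain f where f: "x = f mod P^n" "\<forall>i<length h. (f + h!i) mod P^n \<in> Aq (P^n)"
      unfolding Aqh_def by blast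
    have "x \<in> D (degree P * n)" using f(1) D_mod[of "P^n" f] Pnz unfolding degPn by simp
    moreover have "G h n x" unfolding G_def
    proof (intro allI impI)
      fix i assume "i < length h"
      hence "R n (f + h!i)" using f(2) unfolding R_def by simp
      thus "R n (x + h!i)" using R_shift_per[of n f "h!i"] f(1) by simp
    qed
    ultimately show "x \<in> {r \<in> D (degree P * n). G h n r}" by simp
  next
    fix x assume x: "x \<in> {r \<in> D (degree P * n). G h n r}"
    have xm: "x mod P^n = x" using D_mod_id[of x "P^n"] x unfolding degPn by simp
    have H: "\<forall>i<length h. (x + h!i) mod P^n \<in> Aq (P^n)" using x unfolding G_def R_def by simp
    have "x = x mod P^n \<and> (\<forall>i<length h. (x + h!i) mod P^n \<in> Aq (P^n))" using H xm by simp
    thus "x \<in> Aqh (P^n) h" unfolding Aqh_def by blast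
  qed
  thus ?thesis unfolding c_def cnt_def by simp
qed

lemma cnt_Rshift: "cnt n (\<lambda>r. R n (r + x)) = a n"
  unfolding a_def by (rule cnt_shift) (rule R_per)

lemma a_le: "a n \<le> Q^n"
  unfolding a_def using cnt_mono[of "R n" "\<lambda>_. True" n] cnt_all by simp

lemma c_le_a: assumes "h \<noteq> []" shows "c h n \<le> a n"
proof -
  have "c h n \<le> cnt n (\<lambda>r. R n (r + h!0))"
    unfolding c_def by (rule cnt_mono) (use assms in \<open>auto simp: G_def\<close>)
  thus ?thesis using cnt_Rshift by simp
qed

lemma c_le: "c h n \<le> Q^n"
  unfolding c_def using cnt_mono[of "G h n" "\<lambda>_. True" n] cnt_all by simp

lemma compl_set: "{r \<in> D (degree P * n). \<not> G h n r} = (\<Union>i\<in>{..<length h}. {r \<in> D (degree P * n). \<not> R n (r + h!i)})"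
  unfolding G_def by auto

lemma card_bad: "card {r \<in> D (degree P * n). \<not> R n (r + h!i)} = Q^n - a n"
  using cnt_compl[of n "\<lambda>r. R n (r + h!i)"] cnt_Rshift unfolding cnt_def by simp

lemma compl_le: "Q^n - c h n \<le> length h * (Q^n - a n)"
proof -
  have "Q^n - c h n = card {r \<in> D (degree P * n). \<not> G h n r}"
    using cnt_compl[of n "G h n"] unfolding c_def cnt_def by simp
  also have "\<dots> \<le> (\<Sum>i\<in>{..<length h}. card {r \<in> D (degree P * n). \<not> R n (r + h!i)})"
    unfolding compl_set by (rule card_UN_le) simp
  also have "\<dots> = length h * (Q^n - a n)" using card_bad by simp
  finally show ?thesis .
qed

lemma P_dvd_Delta: assumes "i < length h" "j < length h" "i \<noteq> j" shows "(h!i - h!j) dvd Delta_h h"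
proof -
  have fin: "finite {(i, j). i < length h \<and> j < length h \<and> i \<noteq> j}"
    by (rule finite_subset[of _ "{..<length h} \<times> {..<length h}"]) auto
  have "(\<lambda>(i,j). h!i - h!j) (i,j) dvd (\<Prod>(i, j) \<in> {(i, j). i < length h \<and> j < length h \<and> i \<noteq> j}. h ! i - h ! j)"
    by (rule dvd_prodI[OF fin]) (use assms in simp)
  thus ?thesis unfolding Delta_h_def by simp
qed

lemma compl_eq: assumes nd: "\<not> P dvd Delta_h h" shows "Q^n - c h n = length h * (Q^n - a n)"
proof -
  have "Q^n - c h n = card {r \<in> D (degree P * n). \<not> G h n r}"
    using cnt_compl[of n "G h n"] unfolding c_def cnt_def by simp
  also have "\<dots> = (\<Sum>i\<in>{..<length h}. card {r \<in> D (degree P * n). \<not> R n (r + h!i)})"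
    unfolding compl_set
  proof (rule card_UN_disjoint)
    show "\<forall>i\<in>{..<length h}. \<forall>j\<in>{..<length h}. i \<noteq> j \<longrightarrow>
      {r \<in> D (degree P * n). \<not> R n (r + h!i)} \<inter> {r \<in> D (degree P * n). \<not> R n (r + h!j)} = {}"
    proof (intro ballI impI)
      fix i j assume ij: "i \<in> {..<length h}" "j \<in> {..<length h}" "i \<noteq> j"
      show "{r \<in> D (degree P * n). \<not> R n (r + h!i)} \<inter> {r \<in> D (degree P * n). \<not> R n (r + h!j)} = {}"
      proof (rule ccontr)
        assume "\<not> ?thesis"
        then obtain r where r: "\<not> R n (r + h!i)" "\<not> R n (r + h!j)" by blast
        have "P dvd r + h!i" "P dvd r + h!j" using r unitR by blast+
        hence "P dvd (r + h!i) - (r + h!j)" by (rule dvd_diff)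
        hence "P dvd h!i - h!j" by simp
        hence "P dvd Delta_h h" using P_dvd_Delta[where i=i and j=j and h=h] ij by (meson dvd_trans lessThan_iff)
        thus False using nd by simp
      qed
    qed
  qed simp_all
  also have "\<dots> = length h * (Q^n - a n)" using card_bad by simp
  finally show ?thesis .
qed

lemma step_bound:
  "card {r \<in> D (degree P * Suc n). G h (Suc n) r} \<le> card {r \<in> D (degree P * Suc n). G h n r} + length h * Q
   \<and> card {r \<in> D (degree P * Suc n). G h n r} \<le> card {r \<in> D (degree P * Suc n). G h (Suc n) r} + length h * Q"
proof -
  define Dm where "Dm = (D (degree P * Suc n) :: 'a poly set)"
  define U where "U = (\<Union>i\<in>{..<length h}. {r \<in> Dm. P^n dvd r + h!i})"
  have cU: "card U \<le> length h * Q"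
  proof -
    have "card U \<le> (\<Sum>i\<in>{..<length h}. card {r \<in> Dm. P^n dvd r + h!i})"
      unfolding U_def by (rule card_UN_le) simp
    also have "\<dots> = (\<Sum>i\<in>{..<length h}. Q)"
    proof (rule sum.cong[OF refl])
      fix i
      have "card {r \<in> Dm. P^n dvd r + h!i} = cnt (Suc n) (\<lambda>r. P^n dvd r + h!i)" unfolding Dm_def cnt_def ..
      also have "\<dots> = Q^(Suc n - n)" by (rule cnt_dvd) simp
      finally show "card {r \<in> Dm. P^n dvd r + h!i} = Q" by simp
    qed
    finally show ?thesis by simp
  qed
  have same: "G h (Suc n) r = G h n r" if "r \<notin> U" "r \<in> Dm" for r
    unfolding G_def using that Rstep unfolding U_def by blast
  have finU: "finite U" unfolding U_def Dm_def by simp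
  have fin: "finite Dm" unfolding Dm_def by simp
  have s1: "{r \<in> Dm. G h (Suc n) r} \<subseteq> {r \<in> Dm. G h n r} \<union> U" using same by blast
  have s2: "{r \<in> Dm. G h n r} \<subseteq> {r \<in> Dm. G h (Suc n) r} \<union> U" using same by blast
  have "card {r \<in> Dm. G h (Suc n) r} \<le> card ({r \<in> Dm. G h n r} \<union> U)"
    by (rule card_mono[OF _ s1]) (use fin finU in simp)
  also have "\<dots> \<le> card {r \<in> Dm. G h n r} + card U" by (rule card_Un_le)
  finally have i1: "card {r \<in> Dm. G h (Suc n) r} \<le> card {r \<in> Dm. G h n r} + length h * Q" using cU by simp
  have "card {r \<in> Dm. G h n r} \<le> card ({r \<in> Dm. G h (Suc n) r} \<union> U)"
    by (rule card_mono[OF _ s2]) (use fin finU in simp)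
  also have "\<dots> \<le> card {r \<in> Dm. G h (Suc n) r} + card U" by (rule card_Un_le)
  finally have i2: "card {r \<in> Dm. G h n r} \<le> card {r \<in> Dm. G h (Suc n) r} + length h * Q" using cU by simp
  show ?thesis using i1 i2 unfolding Dm_def by blast
qed

lemma step_c: "c h (Suc n) \<le> Q * c h n + length h * Q \<and> Q * c h n \<le> c h (Suc n) + length h * Q"
proof -
  have "cnt (Suc n) (G h n) = Q^(Suc n - n) * cnt n (G h n)"
    by (rule cnt_per) (simp, rule G_per)
  hence e: "card {r \<in> D (degree P * Suc n). G h n r} = Q * c h n" unfolding c_def cnt_def by simp
  show ?thesis using step_bound[of n h] unfolding e c_def cnt_def by simp
qed

end



context qs begin

lemma Q_gt1: "Q > 1"
proof -
  have "card {0::'a, 1} \<le> card (UNIV::'a set)" by (rule card_mono) auto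
  hence c2: "card (UNIV::'a set) \<ge> 2" by simp
  have "card (UNIV::'a set) ^ 1 \<le> card (UNIV::'a set) ^ degree P"
    using degP c2 by (intro power_increasing) auto
  thus ?thesis unfolding Q_def using c2 by simp
qed

definition bs :: "nat \<Rightarrow> real" where "bs n = real (a n) / real Q ^ n"
definition L :: real where "L = real Q / (real Q + 1)"

lemma b_rec: "bs (n+2) = 1 - 1 / real Q + bs n / (real Q)^2"
proof -
  have Qp: "real Q > 1" using Q_gt1 by simp
  have le: "Q^(n+1) \<le> Q^(n+2)" using Q_gt1 by (intro power_increasing) auto
  have r1: "real (a (n+2)) = real (Q^(n+2) - Q^(n+1)) + real (a n)"
    using a_rec[of n] by (metis of_nat_add)
  have r2: "real (Q^(n+2) - Q^(n+1)) = real Q^(n+2) - real Q^(n+1)"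
    using le by (metis of_nat_diff of_nat_power)
  have "real (a (n+2)) = real Q^(n+2) - real Q^(n+1) + real (a n)" using r1 r2 by simp
  hence "bs (n+2) = (real Q^(n+2) - real Q^(n+1) + real (a n)) / real Q^(n+2)"
    unfolding bs_def by simp
  also have "\<dots> = 1 - 1 / real Q + (real (a n) / real Q^n) / (real Q)^2"
    using Qp by (simp add: field_simps power_add power2_eq_square)
  finally show ?thesis unfolding bs_def .
qed

lemma b01: "bs 0 = 1" "bs 1 = 1"
  unfolding bs_def using a0 a1 Q_gt1 by auto

lemma e_bound: "\<bar>bs n - L\<bar> \<le> real Q * (1 / real Q)^n"
proof (induct n rule: less_induct)
  case (less n)
  have Qp: "real Q > 1" using Q_gt1 by simp
  have L01: "0 \<le> L" "L \<le> 1" unfolding L_def using Qp by (auto simp: field_simps)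
  show ?case
  proof (cases "n < 2")
    case True
    hence "n = 0 \<or> n = 1" by auto
    thus ?thesis
    proof
      assume n: "n = 0"
      have "\<bar>bs n - L\<bar> \<le> 1" using b01 L01 n by simp
      thus ?thesis using n Qp by simp
    next
      assume n: "n = 1"
      have "\<bar>bs n - L\<bar> \<le> 1" using b01 L01 n by simp
      thus ?thesis using n Qp by simp
    qed
  next
    case False
    then obtain m where n: "n = m + 2" by (metis add.commute le_Suc_ex not_less)
    have IH: "\<bar>bs m - L\<bar> \<le> real Q * (1 / real Q)^m" using less n by simp
    have LL: "L = 1 - 1 / real Q + L / (real Q)^2"
    proof -
      have "real Q * real Q + real Q * (real Q * real Q) > 0" using Qp by (simp add: add_pos_pos)
      thus ?thesis unfolding L_def using Qp by (simp add: field_simps power2_eq_square)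
    qed
    have "bs n - L = (bs m - L) / (real Q)^2" unfolding n b_rec
      by (subst LL) (simp add: diff_divide_distrib)
    hence "\<bar>bs n - L\<bar> = \<bar>bs m - L\<bar> / (real Q)^2" by simp
    also have "\<dots> \<le> real Q * (1 / real Q)^m / (real Q)^2"
      using IH Qp by (intro divide_right_mono) auto
    also have "\<dots> = real Q * (1 / real Q)^n" unfolding n using Qp
      by (simp add: power_add power2_eq_square field_simps)
    finally show ?thesis .
  qed
qed

lemma b_lim: "bs \<longlonglongrightarrow> L"
proof -
  have Qp: "real Q > 1" using Q_gt1 by simp
  have z: "(\<lambda>n. real Q * (1 / real Q)^n) \<longlonglongrightarrow> 0"
    using Qp by (intro tendsto_mult_right_zero LIMSEQ_power_zero) auto
  have "(\<lambda>n. bs n - L) \<longlonglongrightarrow> 0"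
  proof (rule tendsto_0_le[OF z, of _ 1])
    have "norm (bs n - L) \<le> norm (real Q * (1 / real Q)^n) * 1" for n
      using e_bound[of n] Qp by simp
    thus "\<forall>\<^sub>F n in sequentially. norm (bs n - L) \<le> norm (real Q * (1 / real Q)^n) * 1"
      by simp
  qed
  thus ?thesis by (simp add: LIM_zero_iff)
qed

definition ds :: "'a poly list \<Rightarrow> nat \<Rightarrow> real" where "ds h n = real (c h n) / real Q ^ n"

lemma ds_le: "h \<noteq> [] \<Longrightarrow> ds h n \<le> bs n"
  unfolding ds_def bs_def using c_le_a[of h n] Q_gt1 by (intro divide_right_mono) auto

lemma ds_ge: "ds h n \<ge> 1 - real (length h) * (1 - bs n)"
proof -
  have Qp: "real Q ^ n > 0" using Q_gt1 by simp
  have "real (Q^n - c h n) \<le> real (length h * (Q^n - a n))" using compl_le[of n h] by linarith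
  hence "real Q^n - real (c h n) \<le> real (length h) * (real Q^n - real (a n))"
    using c_le[of h n] a_le[of n] by (simp add: of_nat_diff)
  hence "(real Q^n - real (c h n)) / real Q^n \<le> real (length h) * (real Q^n - real (a n)) / real Q^n"
    using Qp by (intro divide_right_mono) auto
  thus ?thesis unfolding ds_def bs_def using Qp by (simp add: field_simps)
qed

lemma ds_eq: "\<not> P dvd Delta_h h \<Longrightarrow> ds h n = 1 - real (length h) * (1 - bs n)"
proof -
  assume nd: "\<not> P dvd Delta_h h"
  have Qp: "real Q ^ n > 0" using Q_gt1 by simp
  have "real (Q^n - c h n) = real (length h * (Q^n - a n))" using compl_eq[OF nd, of n] by simp
  hence "real Q^n - real (c h n) = real (length h) * (real Q^n - real (a n))"
    using c_le[of h n] a_le[of n] by (simp add: of_nat_diff)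
  hence ce: "real (c h n) = real Q^n - real (length h) * (real Q^n - real (a n))" by linarith
  show ?thesis unfolding ds_def bs_def ce using Qp by (simp add: field_simps)
qed

lemma ds_step: "\<bar>ds h (Suc n) - ds h n\<bar> \<le> real (length h) * (1 / real Q)^n"
proof -
  have Qp: "real Q > 1" using Q_gt1 by simp
  have s1: "real (c h (Suc n)) \<le> real Q * real (c h n) + real (length h) * real Q"
    using step_c[of h n] by (metis of_nat_add of_nat_le_iff of_nat_mult)
  have s2: "real Q * real (c h n) \<le> real (c h (Suc n)) + real (length h) * real Q"
    using step_c[of h n] by (metis of_nat_add of_nat_le_iff of_nat_mult)
  have e: "ds h (Suc n) - ds h n = (real (c h (Suc n)) - real Q * real (c h n)) / real Q^(Suc n)"
    unfolding ds_def using Qp by (simp add: field_simps)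
  have "\<bar>real (c h (Suc n)) - real Q * real (c h n)\<bar> \<le> real (length h) * real Q" using s1 s2 by linarith
  hence "\<bar>real (c h (Suc n)) - real Q * real (c h n)\<bar> / real Q^(Suc n) \<le> real (length h) * real Q / real Q^(Suc n)"
    by (rule divide_right_mono) (use Qp in simp)
  moreover have "\<bar>ds h (Suc n) - ds h n\<bar> = \<bar>real (c h (Suc n)) - real Q * real (c h n)\<bar> / real Q^(Suc n)"
    unfolding e using Qp by simp
  ultimately have "\<bar>ds h (Suc n) - ds h n\<bar> \<le> real (length h) * real Q / real Q^(Suc n)" by simp
  also have "\<dots> = real (length h) * (1 / real Q)^n" using Qp by (simp add: field_simps)
  finally show ?thesis .
qed

lemma ds_conv: "convergent (ds h)"
proof -
  have Qp: "real Q > 1" using Q_gt1 by simp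
  define f where "f = (\<lambda>n. ds h (Suc n) - ds h n)"
  have sg: "summable (\<lambda>n. real (length h) * (1 / real Q)^n)"
    using Qp by (intro summable_mult summable_geometric) auto
  have sf: "summable f"
    by (rule summable_comparison_test[OF _ sg]) (use ds_step in \<open>auto simp: f_def\<close>)
  have "(\<lambda>n. \<Sum>i<n. f i) \<longlonglongrightarrow> suminf f" using summable_LIMSEQ[OF sf] .
  hence "(\<lambda>n. ds h 0 + (\<Sum>i<n. f i)) \<longlonglongrightarrow> ds h 0 + suminf f" by (intro tendsto_add) auto
  moreover have "(\<lambda>n. ds h 0 + (\<Sum>i<n. f i)) = ds h"
    by (rule ext) (simp add: f_def sum_lessThan_telescope)
  ultimately show ?thesis unfolding convergent_def by auto
qed

end



theorem mainTheorem10: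
  fixes P :: "'a::{finite,field} poly" and h :: "'a poly list"
  assumes "odd (card (UNIV :: 'a set))"
    and "lead_coeff P = 1" and "irreducible P"
    and "chi_q P = -1"
    and "h \<noteq> []" and "distinct h"
  shows "\<exists>\<eta>::real. 1 \<le> \<eta> \<and> \<eta> \<le> real (length h) \<and>
           (\<lambda>\<nu>. real (card (Aqh (P ^ \<nu>) h)) / real (polnorm P) ^ \<nu>)
              \<longlonglongrightarrow> 1 - \<eta> / (real (polnorm P) + 1) \<and>
           (h = [0] \<longrightarrow> \<eta> = 1) \<and>
           (\<not> P dvd Delta_h h \<longrightarrow> \<eta> = real (length h))"
proof -
  interpret qs P using assms(1-4) by unfold_locales
  have QP: "polnorm P = Q" unfolding polnorm_def Q_def ..
  have Qp: "real Q > 1" using Q_gt1 by simp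
  have seq: "(\<lambda>\<nu>. real (card (Aqh (P ^ \<nu>) h)) / real Q ^ \<nu>) = ds h"
    by (rule ext) (simp add: Aqh_card ds_def)
  obtain Ld where Ld: "ds h \<longlonglongrightarrow> Ld" using ds_conv[of h] unfolding convergent_def by blast
  define k where "k = real (length h)"
  define \<eta> where "\<eta> = (1 - Ld) * (real Q + 1)"
  have oneL: "1 - L = 1 / (real Q + 1)" unfolding L_def using Qp by (simp add: field_simps)
  have lim_eq: "1 - \<eta> / (real Q + 1) = Ld" unfolding \<eta>_def using Qp by simp
  have up: "Ld \<le> L"
    by (rule LIMSEQ_le[OF Ld b_lim]) (use ds_le[OF assms(5)] in auto)
  have lowlim: "(\<lambda>n. 1 - k * (1 - bs n)) \<longlonglongrightarrow> 1 - k * (1 - L)"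
    by (intro tendsto_intros b_lim)
  have low: "1 - k * (1 - L) \<le> Ld"
    by (rule LIMSEQ_le[OF lowlim Ld]) (use ds_ge[of h] in \<open>auto simp: k_def\<close>)
  have e1: "1 \<le> \<eta>"
  proof -
    have "1 - L \<le> 1 - Ld" using up by simp
    hence "(1 - L) * (real Q + 1) \<le> (1 - Ld) * (real Q + 1)" using Qp by (intro mult_right_mono) auto
    thus ?thesis unfolding \<eta>_def oneL using Qp by simp
  qed
  have e2: "\<eta> \<le> k"
  proof -
    have "1 - Ld \<le> k * (1 - L)" using low by simp
    hence "(1 - Ld) * (real Q + 1) \<le> k * (1 - L) * (real Q + 1)" using Qp by (intro mult_right_mono) auto
    thus ?thesis unfolding \<eta>_def oneL using Qp by simp
  qed
  have e3: "\<eta> = k" if nd: "\<not> P dvd Delta_h h"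
  proof -
    have "ds h = (\<lambda>n. 1 - k * (1 - bs n))" by (rule ext) (simp add: ds_eq[OF nd] k_def)
    hence "ds h \<longlonglongrightarrow> 1 - k * (1 - L)" using lowlim by simp
    hence "Ld = 1 - k * (1 - L)" using Ld LIMSEQ_unique by blast
    thus ?thesis unfolding \<eta>_def oneL using Qp by simp
  qed
  have e4: "\<eta> = 1" if h0: "h = [0]"
  proof -
    have E: "{(i, j). i < length h \<and> j < length h \<and> i \<noteq> j} = ({} :: (nat \<times> nat) set)" using h0 by auto
    have "Delta_h h = 1" unfolding Delta_h_def E by (rule prod.empty)
    moreover have "\<not> P dvd 1" using assms(3) irreducible_not_unit by blast
    ultimately have "\<eta> = k" using e3 by simp
    thus ?thesis using h0 k_def by simp
  qed
  show ?thesis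
    using e1 e2 e3 e4 lim_eq Ld unfolding QP seq k_def by (intro exI[of _ \<eta>]) auto
qed


end
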